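(* Let $\mathcal{X}\subset\mathbb{R}$ be compact and let $p$ be a continuous probability density on $\mathcal{X}$ with $\inf_{x\in\mathcal{X}}p(x)>\delta$ for some $\delta>0$. Then for every $\epsilon>0$ there exist an integer $N\ge1$ and real constants $\mu_i\in\mathbb{R}$, $\sigma_i>0$ ($i=1,\dots,N$) such that, defining $$F_N(x)=\frac{1}{N}\sum_{i=1}^N \sigma\!\left(\frac{x-\mu_i}{\sigma_i}\right)$$ and $Y=\Phi^{-1}(F_N(X))$ for $X\sim p$, the distribution of $Y$ satisfies $\mathrm{KL}(\mathrm{Law}(Y)\,\|\,\mathcal{N}(0,1))<\epsilon$.
   Context: $\sigma(t)=1/(1+e^{-t})$ is the sigmoid function; $\Phi$ is the CDF of the standard normal distribution $\mathcal{N}(0,1)$ and $\Phi^{-1}$ its inverse; $\mathrm{KL}$ is the Kullback–Leibler divergence. *)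

theory Defs
  imports "HOL-Probability.Probability"
begin

definition sigmoid :: "real \<Rightarrow> real" where
  "sigmoid t = 1 / (1 + exp (- t))"

definition Phi :: "real \<Rightarrow> real" where
  "Phi x = measure (density lborel std_normal_density) {..x}"

definition Phi_inv :: "real \<Rightarrow> real" where
  "Phi_inv y = (THE x. Phi x = y)"

text \<open>Note the library's KL_divergence b M N takes the reference measure M first.\<close>
definition KL_div :: "real measure \<Rightarrow> real measure \<Rightarrow> ereal" where
  "KL_div P Q =
     (if sets P = sets Q \<and> absolutely_continuous Q P
         \<and> integrable P (entropy_density (exp 1) Q P)
      then ereal (KL_divergence (exp 1) Q P) else \<infinity>)"

end

theory Submission
  imports Defs "HOL-Real_Asymp.Real_Asymp"
begin

definition lgd :: "real \<Rightarrow> real" where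
  "lgd t = sigmoid t * (1 - sigmoid t)"

lemma den_pos: "0 < 1 + exp (- (t::real))"
  using exp_gt_zero[of "- t"] by linarith

lemma sigmoid_pos: "0 < sigmoid t"
  unfolding sigmoid_def using den_pos[of t] by (intro divide_pos_pos) auto

lemma sigmoid_lt1: "sigmoid t < 1"
proof -
  have d: "0 < 1 + exp (-t)" by (rule den_pos)
  have "1 < 1 + exp (-t)" using exp_gt_zero[of "-t"] by linarith
  then show ?thesis unfolding sigmoid_def using d by (simp add: divide_less_eq_1_pos)
qed

lemma one_minus_sigmoid: "1 - sigmoid t = exp (- t) / (1 + exp (- t))"
  using den_pos[of t] by (simp add: sigmoid_def field_simps)

lemma sigmoid_le_exp: "sigmoid t \<le> exp t"
proof -
  have "sigmoid t = exp t / (exp t + 1)"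
    by (simp add: sigmoid_def exp_minus field_simps add_pos_pos)
  also have "\<dots> \<le> exp t" by (simp add: divide_le_eq add_pos_pos)
  finally show ?thesis .
qed

lemma one_minus_sigmoid_le_exp: "1 - sigmoid t \<le> exp (- t)"
  unfolding one_minus_sigmoid by (simp add: divide_le_eq add_pos_pos)

lemma DERIV_sigmoid: "(sigmoid has_real_derivative lgd t) (at t)"
proof -
  have "((\<lambda>t. 1 / (1 + exp (- t))) has_real_derivative
      (- (exp (-t) * (-1)) / (1 + exp (-t))^2)) (at t)"
    using den_pos[of t] by (auto intro!: derivative_eq_intros simp: power2_eq_square)
  moreover have "(- (exp (-t) * (-1)) / (1 + exp (-t))^2) = lgd t"
    unfolding lgd_def one_minus_sigmoid by (simp add: sigmoid_def power2_eq_square)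
  ultimately show ?thesis unfolding sigmoid_def[abs_def] by simp
qed

lemma lgd_pos: "0 < lgd t"
  using sigmoid_pos[of t] sigmoid_lt1[of t] by (simp add: lgd_def)

lemma lgd_le: "lgd t \<le> 1/4"
proof -
  have "0 \<le> (sigmoid t - 1/2)^2" by simp
  then show ?thesis unfolding lgd_def by (simp add: power2_eq_square algebra_simps)
qed

lemma lgd_le_exp: "lgd t \<le> exp (- \<bar>t\<bar>)"
proof -
  have a: "lgd t \<le> 1 - sigmoid t" using sigmoid_pos[of t] sigmoid_lt1[of t]
    unfolding lgd_def by (simp add: mult_le_cancel_right1)
  have b: "lgd t \<le> sigmoid t" using sigmoid_pos[of t] sigmoid_lt1[of t]
    unfolding lgd_def by (simp add: mult_le_cancel_left1)
  show ?thesis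
  proof (cases "t \<ge> 0")
    case True then show ?thesis using a one_minus_sigmoid_le_exp[of t] by simp
  next
    case False then show ?thesis using b sigmoid_le_exp[of t] by simp
  qed
qed

lemma DERIV_lgd: "(lgd has_real_derivative (lgd t * (1 - 2 * sigmoid t))) (at t)"
proof -
  have "((\<lambda>t. sigmoid t * (1 - sigmoid t)) has_real_derivative
     (lgd t * (1 - sigmoid t) + sigmoid t * (- lgd t))) (at t)"
    by (auto intro!: derivative_eq_intros DERIV_sigmoid)
  then show ?thesis unfolding lgd_def[abs_def] by (simp add: algebra_simps lgd_def)
qed

lemma lgd_deriv_bnd: "\<bar>lgd t * (1 - 2 * sigmoid t)\<bar> \<le> 1/4"
proof -
  have "\<bar>1 - 2 * sigmoid t\<bar> \<le> 1" using sigmoid_pos[of t] sigmoid_lt1[of t] by auto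
  then have "\<bar>lgd t\<bar> * \<bar>1 - 2 * sigmoid t\<bar> \<le> (1/4) * 1"
    using lgd_le[of t] lgd_pos[of t]
    by (intro mult_mono) auto
  then show ?thesis by (simp add: abs_mult)
qed

lemma lgd_lipschitz_le: assumes "a \<le> b" shows "\<bar>lgd b - lgd a\<bar> \<le> (b - a) / 4"
proof (cases "a = b")
  case True then show ?thesis by simp
next
  case False
  with assms have ab: "a < b" by simp
  obtain z where z: "lgd b - lgd a = (b - a) * (lgd z * (1 - 2 * sigmoid z))"
    using MVT2[OF ab, of lgd "\<lambda>t. lgd t * (1 - 2 * sigmoid t)"] DERIV_lgd by blast
  have "\<bar>lgd b - lgd a\<bar> = (b - a) * \<bar>lgd z * (1 - 2 * sigmoid z)\<bar>"
    unfolding z abs_mult using ab by simp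
  also have "\<dots> \<le> (b - a) * (1/4)"
    using ab lgd_deriv_bnd[of z] by (intro mult_left_mono) auto
  finally show ?thesis by simp
qed

lemma lgd_lipschitz: "\<bar>lgd a - lgd b\<bar> \<le> \<bar>a - b\<bar> / 4"
proof (cases "a \<le> b")
  case True
  then show ?thesis using lgd_lipschitz_le[of a b] by (simp add: abs_minus_commute)
next
  case False
  then show ?thesis using lgd_lipschitz_le[of b a] by simp
qed

lemma sigmoid_diff_le: assumes "0 \<le> d"
  shows "sigmoid u - sigmoid (u - d) \<le> d * lgd u + d^2 / 4"
proof (cases "d = 0")
  case True then show ?thesis by simp
next
  case False
  with assms have "u - d < u" by simp
  from MVT2[OF this, of sigmoid lgd] DERIV_sigmoid
  obtain z where z: "u - d < z" "z < u" "sigmoid u - sigmoid (u - d) = (u - (u - d)) * lgd z"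
    by blast
  have "lgd z \<le> lgd u + \<bar>z - u\<bar> / 4" using lgd_lipschitz[of z u] by linarith
  also have "\<dots> \<le> lgd u + d / 4" using z by simp
  finally have "d * lgd z \<le> d * (lgd u + d / 4)" using assms by (simp add: mult_left_mono)
  then show ?thesis using z by (simp add: power2_eq_square algebra_simps)
qed

lemma sigmoid_strict_mono: "a < b \<Longrightarrow> sigmoid a < sigmoid b"
  using DERIV_pos_imp_increasing[of a b sigmoid] DERIV_sigmoid lgd_pos by blast

lemma sigmoid_neg_le_exp: "sigmoid (- t) \<le> exp (- t)"
  using sigmoid_le_exp by simp

lemma sigmoid_ge: "1 - exp (- t) \<le> sigmoid t"
  using one_minus_sigmoid_le_exp[of t] by simp

lemma sigmoid_at_top: "(sigmoid \<longlongrightarrow> 1) at_top"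
  unfolding sigmoid_def[abs_def] by real_asymp

lemma sigmoid_at_bot: "(sigmoid \<longlongrightarrow> 0) at_bot"
  unfolding sigmoid_def[abs_def] by real_asymp

lemma isCont_sigmoid: "isCont sigmoid t"
  using DERIV_sigmoid DERIV_isCont by blast



lemma emeasure_density_atMost:
  fixes f F :: "real \<Rightarrow> real"
  assumes D: "\<And>x. (F has_real_derivative f x) (at x)"
    and nn: "\<And>x. 0 \<le> f x"
    and fb: "f \<in> borel_measurable borel"
    and lim: "(F \<longlongrightarrow> 0) at_bot"
  shows "emeasure (density lborel f) {..a} = ennreal (F a)"
proof -
  have gb: "(\<lambda>x. ennreal (f x) * indicator {..a} x) \<in> borel_measurable borel"
    using fb by measurable
  have "emeasure (density lborel f) {..a} = (\<integral>\<^sup>+x. ennreal (f x) * indicator {..a} x \<partial>lborel)"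
    using fb by (simp add: emeasure_density)
  also have "\<dots> = ennreal \<bar>-1\<bar> * (\<integral>\<^sup>+x. ennreal (f (0 + (-1) * x)) * indicator {..a} (0 + (-1) * x) \<partial>lborel)"
    by (rule nn_integral_real_affine[OF gb]) simp
  also have "\<dots> = (\<integral>\<^sup>+x. ennreal (f (- x)) * indicator {-a..} x \<partial>lborel)"
    by (simp, intro nn_integral_cong) (auto split: split_indicator)
  also have "\<dots> = ennreal (0 - (- F (- (-a))))"
  proof (rule nn_integral_FTC_atLeast)
    show "(\<lambda>x. f (- x)) \<in> borel_measurable borel" using fb by measurable
    show "((\<lambda>x. - F (- x)) has_real_derivative f (- x)) (at x)" for x
    proof -
      have "((\<lambda>x. F (- x)) has_real_derivative f (- x) * (- 1)) (at x)"
        by (rule DERIV_chain2[where f=F and g=uminus, OF D]) (auto intro!: derivative_eq_intros)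
      then show ?thesis using DERIV_minus by fastforce
    qed
    show "0 \<le> f (- x)" for x by (rule nn)
    show "((\<lambda>x. - F (- x)) \<longlongrightarrow> 0) at_top"
      using tendsto_minus[OF filterlim_compose[OF lim filterlim_uminus_at_bot_at_top]] by simp
  qed
  finally show ?thesis by simp
qed

lemma emeasure_density_UNIV:
  fixes f F :: "real \<Rightarrow> real"
  assumes D: "\<And>x. (F has_real_derivative f x) (at x)"
    and nn: "\<And>x. 0 \<le> f x"
    and fb: "f \<in> borel_measurable borel"
    and lim: "(F \<longlongrightarrow> 0) at_bot"
    and lim1: "(F \<longlongrightarrow> 1) at_top"
  shows "emeasure (density lborel f) UNIV = 1"
proof -
  let ?M = "density lborel f"
  have "(\<lambda>n. ennreal (F (real n))) \<longlonglongrightarrow> ennreal 1"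
    by (intro tendsto_ennrealI filterlim_compose[OF lim1 filterlim_real_sequentially])
  moreover have "(\<lambda>n. ennreal (F (real n))) = (\<lambda>n. emeasure ?M {..real n})"
    using emeasure_density_atMost[OF D nn fb lim] by simp
  moreover have "(\<lambda>n. emeasure ?M {..real n}) \<longlonglongrightarrow> emeasure ?M (\<Union>n. {..real n})"
    by (intro Lim_emeasure_incseq) (auto simp: incseq_def)
  moreover have "(\<Union>n. {..real n}) = UNIV"
    by (auto intro: real_arch_simple)
  ultimately show ?thesis using LIMSEQ_unique by fastforce
qed



definition mixF :: "nat \<Rightarrow> (nat \<Rightarrow> real) \<Rightarrow> (nat \<Rightarrow> real) \<Rightarrow> real \<Rightarrow> real" where
  "mixF N \<mu> s x = (1 / real N) * (\<Sum>i=1..N. sigmoid ((x - \<mu> i) / s i))"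

definition mixf :: "nat \<Rightarrow> (nat \<Rightarrow> real) \<Rightarrow> (nat \<Rightarrow> real) \<Rightarrow> real \<Rightarrow> real" where
  "mixf N \<mu> s x = (1 / real N) * (\<Sum>i=1..N. lgd ((x - \<mu> i) / s i) / s i)"

lemma isCont_lgd: "isCont lgd t"
  using DERIV_lgd DERIV_isCont by blast

lemma DERIV_mixF:
  assumes "\<forall>i\<in>{1..N}. 0 < s i"
  shows "(mixF N \<mu> s has_real_derivative mixf N \<mu> s x) (at x)"
proof -
  have "((\<lambda>x. sigmoid ((x - \<mu> i) / s i)) has_real_derivative lgd ((x - \<mu> i) / s i) / s i) (at x)"
    if "i \<in> {1..N}" for i
  proof -
    have "((\<lambda>x. sigmoid ((x - \<mu> i) / s i)) has_real_derivative lgd ((x - \<mu> i) / s i) * (1 / s i)) (at x)"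
    proof -
      have si: "s i \<noteq> 0" using that assms by force
      show ?thesis using si by (intro DERIV_chain2[OF DERIV_sigmoid]) (auto intro!: derivative_eq_intros)
    qed
    then show ?thesis by simp
  qed
  then have "((\<lambda>x. \<Sum>i=1..N. sigmoid ((x - \<mu> i) / s i)) has_real_derivative
      (\<Sum>i=1..N. lgd ((x - \<mu> i) / s i) / s i)) (at x)"
    by (rule DERIV_sum)
  then show ?thesis unfolding mixF_def[abs_def] mixf_def
    by (rule DERIV_cmult)
qed

lemma mixf_pos:
  assumes "N \<ge> 1" "\<forall>i\<in>{1..N}. 0 < s i"
  shows "0 < mixf N \<mu> s x"
proof -
  have "0 < (\<Sum>i=1..N. lgd ((x - \<mu> i) / s i) / s i)"
    using assms lgd_pos by (intro sum_pos) auto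
  then show ?thesis using assms unfolding mixf_def by simp
qed

lemma mixF_pos:
  assumes "N \<ge> 1"
  shows "0 < mixF N \<mu> s x"
proof -
  have "0 < (\<Sum>i=1..N. sigmoid ((x - \<mu> i) / s i))"
    using assms sigmoid_pos by (intro sum_pos) auto
  then show ?thesis using assms unfolding mixF_def by simp
qed

lemma mixF_lt1:
  assumes "N \<ge> 1"
  shows "mixF N \<mu> s x < 1"
proof -
  have "(\<Sum>i=1..N. sigmoid ((x - \<mu> i) / s i)) < (\<Sum>i=1..N. 1)"
    using assms sigmoid_lt1 by (intro sum_strict_mono) auto
  then show ?thesis using assms unfolding mixF_def by (simp add: divide_less_eq)
qed

lemma mixF_strict_mono:
  assumes "N \<ge> 1" "\<forall>i\<in>{1..N}. 0 < s i" "x < y"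
  shows "mixF N \<mu> s x < mixF N \<mu> s y"
  using DERIV_pos_imp_increasing[OF assms(3), of "mixF N \<mu> s"] DERIV_mixF[OF assms(2)]
    mixf_pos[OF assms(1,2)] by blast

lemma mixF_at_bot:
  assumes "\<forall>i\<in>{1..N}. 0 < s i"
  shows "(mixF N \<mu> s \<longlongrightarrow> 0) at_bot"
proof -
  have "((\<lambda>x. sigmoid ((x - \<mu> i) / s i)) \<longlongrightarrow> 0) at_bot" if "i \<in> {1..N}" for i
  proof (rule filterlim_compose[OF sigmoid_at_bot])
    have si: "0 < s i" using that assms by auto
    show "filterlim (\<lambda>x. (x - \<mu> i) / s i) at_bot at_bot"
      unfolding filterlim_at_bot
    proof
      fix Z
      show "eventually (\<lambda>x. (x - \<mu> i) / s i \<le> Z) at_bot"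
        using eventually_le_at_bot[of "Z * s i + \<mu> i"]
        by eventually_elim (use si in \<open>simp add: field_simps\<close>)
    qed
  qed
  then have "((\<lambda>x. \<Sum>i=1..N. sigmoid ((x - \<mu> i) / s i)) \<longlongrightarrow> (\<Sum>i=1..N. 0)) at_bot"
    by (intro tendsto_sum) auto
  then show ?thesis unfolding mixF_def[abs_def]
    using tendsto_mult[OF tendsto_const, of _ 0 at_bot "1 / real N"] by auto
qed

lemma mixF_at_top:
  assumes "N \<ge> 1" "\<forall>i\<in>{1..N}. 0 < s i"
  shows "(mixF N \<mu> s \<longlongrightarrow> 1) at_top"
proof -
  have "((\<lambda>x. sigmoid ((x - \<mu> i) / s i)) \<longlongrightarrow> 1) at_top" if "i \<in> {1..N}" for i
  proof (rule filterlim_compose[OF sigmoid_at_top])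
    have si: "0 < s i" using that assms by auto
    show "filterlim (\<lambda>x. (x - \<mu> i) / s i) at_top at_top"
      unfolding filterlim_at_top
    proof
      fix Z
      show "eventually (\<lambda>x. Z \<le> (x - \<mu> i) / s i) at_top"
        using eventually_ge_at_top[of "Z * s i + \<mu> i"]
        by eventually_elim (use si in \<open>simp add: field_simps\<close>)
    qed
  qed
  then have "((\<lambda>x. \<Sum>i=1..N. sigmoid ((x - \<mu> i) / s i)) \<longlongrightarrow> (\<Sum>i=1..N. 1)) at_top"
    by (intro tendsto_sum) auto
  then have "((\<lambda>x. (1 / real N) * (\<Sum>i=1..N. sigmoid ((x - \<mu> i) / s i))) \<longlongrightarrow> (1 / real N) * real N) at_top"
    by (intro tendsto_mult[OF tendsto_const]) auto
  then show ?thesis unfolding mixF_def[abs_def] using assms by simp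
qed

lemma isCont_mixf:
  assumes "\<forall>i\<in>{1..N}. 0 < s i"
  shows "isCont (mixf N \<mu> s) x"
proof -
  have "isCont (\<lambda>x. lgd ((x - \<mu> i) / s i) / s i) x" if "i \<in> {1..N}" for i
  proof -
    have si: "s i \<noteq> 0" using that assms by force
    show ?thesis using si by (intro continuous_intros isCont_o2[OF _ isCont_lgd]) auto
  qed
  then show ?thesis unfolding mixf_def[abs_def]
    by (intro continuous_mult[OF continuous_const] continuous_sum) auto
qed

lemma borel_mixf:
  assumes "\<forall>i\<in>{1..N}. 0 < s i"
  shows "mixf N \<mu> s \<in> borel_measurable borel"
  using isCont_mixf[OF assms] by (intro borel_measurable_continuous_onI continuous_at_imp_continuous_on) auto

lemma isCont_mixF:
  assumes "\<forall>i\<in>{1..N}. 0 < s i"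
  shows "isCont (mixF N \<mu> s) x"
  using DERIV_mixF[OF assms] DERIV_isCont by blast

lemma mixf_le:
  assumes "N \<ge> 1" "\<forall>i\<in>{1..N}. 0 < s i"
  shows "mixf N \<mu> s x \<le> (1 / real N) * (\<Sum>i=1..N. 1 / (4 * s i))"
proof -
  have "(\<Sum>i=1..N. lgd ((x - \<mu> i) / s i) / s i) \<le> (\<Sum>i=1..N. 1 / (4 * s i))"
  proof (intro sum_mono)
    fix i assume "i \<in> {1..N}"
    then have "0 < s i" using assms by auto
    then show "lgd ((x - \<mu> i) / s i) / s i \<le> 1 / (4 * s i)"
      using lgd_le[of "(x - \<mu> i) / s i"] by (simp add: divide_simps)
  qed
  then show ?thesis unfolding mixf_def by (intro mult_left_mono) auto
qed

lemma cont_lim_surj: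
  fixes G :: "real \<Rightarrow> real"
  assumes c: "\<And>x. isCont G x" and l0: "(G \<longlongrightarrow> 0) at_bot" and l1: "(G \<longlongrightarrow> 1) at_top"
    and u: "0 < u" "u < 1"
  shows "\<exists>x. G x = u"
proof -
  have "eventually (\<lambda>x. G x < u) at_bot"
    using order_tendstoD(2)[OF l0 u(1)] .
  then obtain a where a: "\<And>x. x \<le> a \<Longrightarrow> G x < u" by (auto simp: eventually_at_bot_linorder)
  have "eventually (\<lambda>x. G x > u) at_top"
    using order_tendstoD(1)[OF l1 u(2)] .
  then obtain b where b: "\<And>x. x \<ge> b \<Longrightarrow> G x > u" by (auto simp: eventually_at_top_linorder)
  have "G (min a b) \<le> u" using a[of "min a b"] by simp
  moreover have "u \<le> G (max a b)" using b[of "max a b"] by simp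
  moreover have "continuous_on {min a b..max a b} G"
    using c by (intro continuous_at_imp_continuous_on) auto
  moreover have "min a b \<le> max a b" by simp
  ultimately show ?thesis
    using IVT'[of G "min a b" u "max a b"] by blast
qed



abbreviation QN :: "real measure" where
  "QN \<equiv> density lborel std_normal_density"

lemma QN_real_distribution: "real_distribution QN"
proof -
  interpret prob_space QN using prob_space_normal_density[of 1 0] by simp
  show ?thesis by unfold_locales simp
qed

lemma Phi_cdf: "Phi = cdf QN"
  by (simp add: Phi_def[abs_def] cdf_def)

lemma Phi_at_bot: "(Phi \<longlongrightarrow> 0) at_bot"
proof -
  interpret real_distribution QN by (rule QN_real_distribution)
  show ?thesis unfolding Phi_cdf by (rule cdf_lim_at_bot)
qed

lemma Phi_at_top: "(Phi \<longlongrightarrow> 1) at_top"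
proof -
  interpret real_distribution QN by (rule QN_real_distribution)
  show ?thesis unfolding Phi_cdf by (rule cdf_lim_at_top_prob)
qed

lemma isCont_Phi: "isCont Phi x"
proof -
  interpret real_distribution QN by (rule QN_real_distribution)
  have "emeasure QN {x} = 0"
    by (subst emeasure_density) (auto intro!: nn_integral_null_set)
  then have "measure QN {x} = 0" by (simp add: measure_def)
  then show ?thesis unfolding Phi_cdf by (simp add: isCont_cdf)
qed

lemma Phi_strict_mono:
  assumes "x < y" shows "Phi x < Phi y"
proof -
  interpret real_distribution QN by (rule QN_real_distribution)
  define m where "m = max \<bar>x\<bar> \<bar>y\<bar>"
  define c where "c = std_normal_density m"
  have c: "0 < c" unfolding c_def by (simp add: normal_density_pos)
  have le: "c \<le> std_normal_density t" if "t \<in> {x<..y}" for t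
  proof -
    have "\<bar>t\<bar> \<le> \<bar>m\<bar>" using that unfolding m_def by (auto simp: max_def)
    then have "t^2 \<le> m^2" by (simp add: abs_le_square_iff)
    then have "exp (- m\<^sup>2 / 2) \<le> exp (- t\<^sup>2 / 2)" by simp
    then show ?thesis unfolding c_def std_normal_density_def
      by (intro mult_left_mono) auto
  qed
  have "ennreal (c * (y - x)) = (\<integral>\<^sup>+t. ennreal c * indicator {x<..y} t \<partial>lborel)"
    using assms c by (simp add: nn_integral_cmult_indicator ennreal_mult)
  also have "\<dots> \<le> (\<integral>\<^sup>+t. ennreal (std_normal_density t) * indicator {x<..y} t \<partial>lborel)"
    using le by (intro nn_integral_mono) (auto split: split_indicator intro: ennreal_leI)
  also have "\<dots> = emeasure QN {x<..y}"
    by (subst emeasure_density) auto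
  also have "\<dots> = ennreal (measure QN {x<..y})"
    by (simp add: emeasure_eq_measure)
  finally have "c * (y - x) \<le> measure QN {x<..y}"
    by (subst (asm) ennreal_le_iff) auto
  moreover have "0 < c * (y - x)" using c assms by simp
  ultimately have "0 < measure QN {x<..y}" by linarith
  then show ?thesis unfolding Phi_cdf using cdf_diff_eq[OF assms] by simp
qed

lemma Phi_inv_Phi: "Phi_inv (Phi x) = x"
  unfolding Phi_inv_def
proof (rule the_equality)
  fix y assume "Phi y = Phi x"
  then show "y = x" using Phi_strict_mono[of x y] Phi_strict_mono[of y x]
    by (cases x y rule: linorder_cases) auto
qed simp

lemma Phi_surj: assumes "0 < u" "u < 1" shows "\<exists>x. Phi x = u"
  using cont_lim_surj[OF isCont_Phi Phi_at_bot Phi_at_top assms] .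

lemma Phi_Phi_inv: assumes "0 < u" "u < 1" shows "Phi (Phi_inv u) = u"
  using Phi_surj[OF assms] Phi_inv_Phi by auto

lemma Phi_le_iff: "Phi x \<le> Phi y \<longleftrightarrow> x \<le> y"
  using Phi_strict_mono[of x y] Phi_strict_mono[of y x]
  by (cases x y rule: linorder_cases) auto

lemma Phi_inv_le_iff: assumes "0 < u" "u < 1" shows "Phi_inv u \<le> y \<longleftrightarrow> u \<le> Phi y"
  using Phi_le_iff[of "Phi_inv u" y] Phi_Phi_inv[OF assms] by simp



lemma mixF_Phi_inv_strict_mono:
  assumes N: "N \<ge> 1" and s: "\<forall>i\<in>{1..N}. 0 < s i" and xy: "x < y"
  shows "Phi_inv (mixF N \<mu> s x) < Phi_inv (mixF N \<mu> s y)"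
proof -
  let ?F = "mixF N \<mu> s"
  have "?F x < ?F y" using mixF_strict_mono[OF N s xy] .
  moreover have "Phi (Phi_inv (?F x)) = ?F x" "Phi (Phi_inv (?F y)) = ?F y"
    using Phi_Phi_inv mixF_pos[OF N] mixF_lt1[OF N] by auto
  ultimately show ?thesis using Phi_le_iff by (metis not_less)
qed

lemma Phi_pos: "0 < Phi y"
proof -
  interpret real_distribution QN by (rule QN_real_distribution)
  have "0 \<le> Phi (y - 1)" unfolding Phi_cdf by (rule cdf_nonneg)
  also have "\<dots> < Phi y" by (rule Phi_strict_mono) simp
  finally show ?thesis .
qed

lemma Phi_lt1: "Phi y < 1"
proof -
  interpret real_distribution QN by (rule QN_real_distribution)
  have "Phi y < Phi (y + 1)" by (rule Phi_strict_mono) simp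
  also have "\<dots> \<le> 1" unfolding Phi_cdf by (rule cdf_bounded_prob)
  finally show ?thesis .
qed

lemma KL_reduction:
  fixes pt :: "real \<Rightarrow> real" and N :: nat and \<mu> s :: "nat \<Rightarrow> real" and c1 c2 :: real
  assumes N: "N \<ge> 1" and s: "\<forall>i\<in>{1..N}. 0 < s i"
    and ptb: "pt \<in> borel_measurable borel" and ptn: "\<And>x. 0 \<le> pt x"
    and Pprob: "prob_space (density lborel pt)"
    and c1: "0 < c1"
    and bnd: "\<And>x. pt x \<noteq> 0 \<Longrightarrow> c1 \<le> pt x / mixf N \<mu> s x \<and> pt x / mixf N \<mu> s x \<le> c2"
  shows "KL_div (distr (density lborel pt) lborel (\<lambda>x. Phi_inv (mixF N \<mu> s x))) QN \<le> ereal (ln c2)"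
proof -
  define F where "F = mixF N \<mu> s"
  define f where "f = mixf N \<mu> s"
  define T where "T = (\<lambda>x. Phi_inv (F x))"
  define h where "h = (\<lambda>x. pt x / f x)"
  define g where "g = (\<lambda>y. h (inv T y))"
  define Mf where "Mf = density lborel f"
  define P where "P = density lborel pt"
  have fpos: "\<And>x. 0 < f x" unfolding f_def using mixf_pos[OF N s] .
  have fb: "f \<in> borel_measurable borel" unfolding f_def using borel_mixf[OF s] .
  have Fderiv: "\<And>x. (F has_real_derivative f x) (at x)" unfolding F_def f_def using DERIV_mixF[OF s] .
  have F01: "\<And>x. 0 < F x \<and> F x < 1" unfolding F_def using mixF_pos[OF N] mixF_lt1[OF N] by auto
  have Fmono: "\<And>x y. x < y \<Longrightarrow> F x < F y" unfolding F_def using mixF_strict_mono[OF N s] by blast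
  have Fle: "\<And>x y. F x \<le> F y \<longleftrightarrow> x \<le> y"
    using Fmono by (metis linorder_not_less order_less_imp_le order_less_le)
  have Tmono: "\<And>x y. x < y \<Longrightarrow> T x < T y"
    unfolding T_def F_def using mixF_Phi_inv_strict_mono[OF N s] by blast
  have Tinj: "inj T"
    by (rule injI) (metis Tmono linorder_neqE_linordered_idom less_irrefl)
  have Tsurj: "surj T"
  proof -
    have "\<exists>x. T x = y" for y
    proof -
      obtain x where "F x = Phi y"
        using cont_lim_surj[of F "Phi y"] Phi_pos Phi_lt1 isCont_mixF[OF s] mixF_at_bot[OF s]
          mixF_at_top[OF N s] unfolding F_def by blast
      then have "T x = y" unfolding T_def by (simp add: Phi_inv_Phi)
      then show ?thesis by blast
    qed
    then show ?thesis by (metis surjI)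
  qed
  have Tb: "T \<in> borel_measurable borel"
    by (rule borel_measurable_mono) (metis Tmono monoI order_le_less)
  have Tinv_mono: "mono (inv T)"
  proof (rule monoI)
    fix a b :: real assume "a \<le> b"
    show "inv T a \<le> inv T b"
    proof (rule ccontr)
      assume "\<not> inv T a \<le> inv T b"
      then have "T (inv T b) < T (inv T a)" using Tmono by simp
      then show False using \<open>a \<le> b\<close> surj_f_inv_f[OF Tsurj] by simp
    qed
  qed
  have Tinvb: "inv T \<in> borel_measurable borel" by (rule borel_measurable_mono[OF Tinv_mono])
  have hb: "h \<in> borel_measurable borel" unfolding h_def using ptb fb by measurable
  have gb: "g \<in> borel_measurable borel" unfolding g_def
    using measurable_comp[OF Tinvb hb] by (simp add: o_def)
  have gT: "g (T x) = h x" for x unfolding g_def using Tinj by simp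

  have Mfprob: "prob_space Mf"
  proof (rule prob_spaceI)
    have "emeasure (density lborel f) UNIV = 1"
      by (rule emeasure_density_UNIV[OF Fderiv _ fb])
         (use fpos less_imp_le mixF_at_bot[OF s] mixF_at_top[OF N s] in \<open>auto simp: F_def\<close>)
    then show "emeasure Mf (space Mf) = 1" by (simp add: Mf_def)
  qed
  interpret Mf: prob_space Mf by (rule Mfprob)
  have sMf: "sets Mf = sets borel" unfolding Mf_def by simp
  have TMf: "T \<in> measurable Mf borel" using Tb by (simp add: Mf_def)
  have distr_eq: "distr Mf lborel T = distr Mf borel T"
    by (rule distr_cong) auto
  have QN_eq: "distr Mf lborel T = QN"
  proof -
    have rd: "real_distribution (distr Mf borel T)"
      using TMf by (rule Mf.real_distribution_distr)
    have "cdf (distr Mf borel T) = cdf QN"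
    proof
      fix y
      obtain a where a: "F a = Phi y"
        using cont_lim_surj[of F "Phi y"] Phi_pos Phi_lt1 isCont_mixF[OF s] mixF_at_bot[OF s]
          mixF_at_top[OF N s] unfolding F_def by blast
      have "T -` {..y} \<inter> space Mf = {..a}"
      proof -
        have "T x \<le> y \<longleftrightarrow> x \<le> a" for x
          unfolding T_def using Phi_inv_le_iff[of "F x" y] F01[of x] a Fle[of x a] by simp
        then show ?thesis by (auto simp: Mf_def)
      qed
      then have "cdf (distr Mf borel T) y = measure Mf {..a}"
        using TMf by (simp add: cdf_def measure_distr)
      also have "\<dots> = F a"
      proof -
        have fnn: "\<And>x. 0 \<le> f x" using fpos less_imp_le by blast
        have "emeasure Mf {..a} = ennreal (F a)"
          unfolding Mf_def using emeasure_density_atMost[OF Fderiv fnn fb] mixF_at_bot[OF s]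
          by (simp add: F_def)
        then show ?thesis unfolding measure_def using F01[of a] by simp
      qed
      also have "\<dots> = cdf QN y" using a by (simp add: Phi_cdf)
      finally show "cdf (distr Mf borel T) y = cdf QN y" .
    qed
    then have "distr Mf borel T = QN"
      using cdf_unique[OF rd QN_real_distribution] by blast
    then show ?thesis using distr_eq by simp
  qed

  have P_eq: "P = density Mf h"
  proof -
    have "density Mf h = density lborel (\<lambda>x. ennreal (f x) * ennreal (h x))"
      unfolding Mf_def by (rule density_density_eq) (use fb hb in auto)
    also have "(\<lambda>x. ennreal (f x) * ennreal (h x)) = (\<lambda>x. ennreal (pt x))"
    proof
      fix x
      have "ennreal (f x) * ennreal (h x) = ennreal (f x * h x)"
        using fpos[of x] ptn[of x] unfolding h_def by (subst ennreal_mult[symmetric]) auto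
      also have "f x * h x = pt x" using fpos[of x] by (simp add: h_def)
      finally show "ennreal (f x) * ennreal (h x) = ennreal (pt x)" .
    qed
    finally show ?thesis unfolding P_def by simp
  qed
  define D where "D = distr P lborel T"
  have D_eq: "D = density QN g"
  proof -
    have 1: "D = distr (density Mf (\<lambda>x. ennreal (g (T x)))) lborel T"
      by (simp add: D_def P_eq gT)
    have gb': "(\<lambda>y. ennreal (g y)) \<in> borel_measurable lborel" using gb by simp
    have TMf': "T \<in> measurable Mf lborel" using TMf by simp
    have 2: "density (distr Mf lborel T) (\<lambda>y. ennreal (g y)) = distr (density Mf (\<lambda>x. ennreal (g (T x)))) lborel T"
      by (rule density_distr[OF gb' TMf'])
    show ?thesis using 1 2 QN_eq by simp
  qed
  have sD: "sets D = sets QN" unfolding D_eq by simp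
  have acD: "absolutely_continuous QN D"
    unfolding D_eq by (rule absolutely_continuousI_density) (use gb in simp)
  interpret QNp: prob_space QN using prob_space_normal_density[of 1 0] by simp
  have RN: "AE y in QN. ennreal (g y) = RN_deriv QN D y"
    by (rule QNp.RN_deriv_unique) (use gb D_eq in auto)
  have RN_D: "AE y in D. ennreal (g y) = RN_deriv QN D y"
    by (rule absolutely_continuous_AE[OF sD acD RN])
  have ent: "AE y in D. entropy_density (exp 1) QN D y = ln (g y)"
    using RN_D
  proof eventually_elim
    case (elim y)
    have "0 \<le> g y" unfolding g_def h_def using ptn fpos by (simp add: less_imp_le)
    then show ?case unfolding entropy_density_def using elim[symmetric] by (simp add: log_def)
  qed
  have TP: "T \<in> measurable P borel" using Tb by (simp add: P_def)
  have TP': "T \<in> measurable P lborel" using TP by simp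
  have lngb: "(\<lambda>y. ln (g y)) \<in> borel_measurable lborel" using gb by simp
  interpret Pp: prob_space P using Pprob unfolding P_def .
  have AEP: "AE x in P. c1 \<le> h x \<and> h x \<le> c2"
  proof -
    have "AE x in lborel. 0 < ennreal (pt x) \<longrightarrow> c1 \<le> h x \<and> h x \<le> c2"
      using bnd unfolding h_def f_def by (auto simp: ennreal_less_zero_iff)
    then show ?thesis unfolding P_def by (subst AE_density) (use ptb in auto)
  qed
  have int_h: "integrable P (\<lambda>x. ln (h x))"
  proof (rule Pp.integrable_const_bound[where B="max \<bar>ln c1\<bar> \<bar>ln c2\<bar>"])
    show "AE x in P. norm (ln (h x)) \<le> max \<bar>ln c1\<bar> \<bar>ln c2\<bar>"
      using AEP
    proof eventually_elim
      case (elim x)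
      then have "0 < h x" using c1 by linarith
      then have "ln c1 \<le> ln (h x)" "ln (h x) \<le> ln c2" using elim c1 by auto
      then show ?case by auto
    qed
    show "(\<lambda>x. ln (h x)) \<in> borel_measurable P" using hb by (simp add: P_def)
  qed
  have intD: "integrable D (\<lambda>y. ln (g y))"
    unfolding D_def using integrable_distr_eq[OF TP' lngb] int_h gT by simp
  have m1: "entropy_density (exp 1) QN D \<in> borel_measurable D"
    by (subst measurable_cong_sets[OF sD refl]) (rule measurable_entropy_density)
  have m2: "(\<lambda>y. ln (g y)) \<in> borel_measurable D"
    using lngb measurable_cong_sets[of D lborel borel borel] by (simp add: D_def)
  have intE: "integrable D (entropy_density (exp 1) QN D)"
    using integrable_cong_AE[OF m1 m2 ent] intD by simp
  have KLval: "KL_divergence (exp 1) QN D = (\<integral>x. ln (h x) \<partial>P)"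
  proof -
    have "KL_divergence (exp 1) QN D = (\<integral>y. ln (g y) \<partial>D)"
      unfolding KL_divergence_def by (rule integral_cong_AE[OF m1 m2 ent])
    also have "\<dots> = (\<integral>x. ln (g (T x)) \<partial>P)" unfolding D_def by (rule integral_distr[OF TP' lngb])
    finally show ?thesis using gT by simp
  qed
  have "(\<integral>x. ln (h x) \<partial>P) \<le> (\<integral>x. ln c2 \<partial>P)"
  proof (rule integral_mono_AE[OF int_h])
    show "integrable P (\<lambda>x. ln c2)" by simp
    show "AE x in P. ln (h x) \<le> ln c2"
      using AEP
    proof eventually_elim
      case (elim x)
      then have "0 < h x" using c1 by linarith
      then show ?case using elim by auto
    qed
  qed
  also have "\<dots> = ln c2" using Pp.prob_space by simp
  finally have KLle: "KL_divergence (exp 1) QN D \<le> ln c2" using KLval by simp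
  have "KL_div D QN = ereal (KL_divergence (exp 1) QN D)"
    unfolding KL_div_def using sD acD intE by simp
  then show ?thesis using KLle unfolding D_def P_def T_def F_def by simp
qed



lemma kernel_sum_lower:
  fixes s h a0 x :: real and J :: nat
  assumes s: "0 < s" and h: "0 < h"
  shows "sigmoid ((x - a0) / s) - sigmoid ((x - (a0 + real J * h)) / s) - real J * h^2 / (4 * s^2)
         \<le> (\<Sum>j<J. h * (lgd ((x - (a0 + real j * h)) / s) / s))"
proof -
  define G where "G = (\<lambda>j::nat. - sigmoid ((x - (a0 + real j * h)) / s))"
  have tel: "(\<Sum>j<J. G (Suc j) - G j) = G J - G 0" by (rule sum_lessThan_telescope)
  have trm: "G (Suc j) - G j \<le> h * (lgd ((x - (a0 + real j * h)) / s) / s) + h^2 / (4 * s^2)" for j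
  proof -
    define u where "u = (x - (a0 + real j * h)) / s"
    have "(x - (a0 + real (Suc j) * h)) / s = u - h / s"
      unfolding u_def using s by (simp add: field_simps)
    then have "G (Suc j) - G j = sigmoid u - sigmoid (u - h / s)"
      unfolding G_def u_def by simp
    also have "\<dots> \<le> (h / s) * lgd u + (h / s)^2 / 4"
      using sigmoid_diff_le[of "h / s" u] s h by simp
    also have "\<dots> = h * (lgd u / s) + h^2 / (4 * s^2)"
      by (simp add: power2_eq_square)
    finally show ?thesis unfolding u_def .
  qed
  have "G J - G 0 \<le> (\<Sum>j<J. h * (lgd ((x - (a0 + real j * h)) / s) / s) + h^2 / (4 * s^2))"
    unfolding tel[symmetric] by (intro sum_mono trm)
  also have "\<dots> = (\<Sum>j<J. h * (lgd ((x - (a0 + real j * h)) / s) / s)) + real J * h^2 / (4 * s^2)"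
    by (simp add: sum.distrib)
  finally show ?thesis unfolding G_def by simp
qed

lemma counts_mixture_aux:
  fixes k :: "nat \<Rightarrow> nat" and a :: "nat \<Rightarrow> real" and L :: "real \<Rightarrow> real"
  shows "\<exists>\<mu>::nat\<Rightarrow>real. \<forall>x. (\<Sum>i\<in>{1..(\<Sum>j<J. k j)}. L (x - \<mu> i)) = (\<Sum>j<J. real (k j) * L (x - a j))"
proof (induction J)
  case 0 then show ?case by simp
next
  case (Suc J)
  then obtain \<mu> where IH: "\<forall>x. (\<Sum>i\<in>{1..(\<Sum>j<J. k j)}. L (x - \<mu> i)) = (\<Sum>j<J. real (k j) * L (x - a j))"
    by blast
  define K where "K = (\<Sum>j<J. k j)"
  define \<mu>' where "\<mu>' = (\<lambda>i. if i \<le> K then \<mu> i else a J)"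
  have "(\<Sum>i\<in>{1..K + k J}. L (x - \<mu>' i)) = real (k J) * L (x - a J) + (\<Sum>j<J. real (k j) * L (x - a j))" for x
  proof -
    have split: "{1..K + k J} = {1..K} \<union> {K<..K + k J}" by auto
    have "(\<Sum>i\<in>{1..K + k J}. L (x - \<mu>' i)) = (\<Sum>i\<in>{1..K}. L (x - \<mu>' i)) + (\<Sum>i\<in>{K<..K + k J}. L (x - \<mu>' i))"
      unfolding split by (rule sum.union_disjoint) auto
    also have "(\<Sum>i\<in>{1..K}. L (x - \<mu>' i)) = (\<Sum>i\<in>{1..K}. L (x - \<mu> i))"
      by (rule sum.cong) (auto simp: \<mu>'_def)
    also have "(\<Sum>i\<in>{K<..K + k J}. L (x - \<mu>' i)) = (\<Sum>i\<in>{K<..K + k J}. L (x - a J))"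
      by (rule sum.cong) (auto simp: \<mu>'_def)
    also have "\<dots> = real (k J) * L (x - a J)" by simp
    finally show ?thesis using IH unfolding K_def by simp
  qed
  then show ?case unfolding K_def by (intro exI[of _ \<mu>']) (simp add: add.commute)
qed

lemma counts_mixture:
  fixes k :: "nat \<Rightarrow> nat" and a :: "nat \<Rightarrow> real" and s :: real
  assumes N: "N \<ge> 1" and s: "0 < s" and kN: "(\<Sum>j<J. k j) \<le> N"
  shows "\<exists>\<mu> \<sigma>. (\<forall>i\<in>{1..N}. 0 < \<sigma> i) \<and>
     (\<forall>x. (1 / real N) * (\<Sum>j<J. real (k j) * (lgd ((x - a j) / s) / s)) \<le> mixf N \<mu> \<sigma> x)"
proof -
  define L where "L = (\<lambda>t. lgd (t / s) / s)"
  obtain \<mu> where mu: "\<forall>x. (\<Sum>i\<in>{1..(\<Sum>j<J. k j)}. L (x - \<mu> i)) = (\<Sum>j<J. real (k j) * L (x - a j))"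
    using counts_mixture_aux[of L k J a] by blast
  have Lnn: "0 \<le> L t" for t unfolding L_def using lgd_pos[of "t / s"] s by simp
  have "(1 / real N) * (\<Sum>j<J. real (k j) * (lgd ((x - a j) / s) / s)) \<le> mixf N \<mu> (\<lambda>_. s) x" for x
  proof -
    have "(\<Sum>j<J. real (k j) * (lgd ((x - a j) / s) / s)) = (\<Sum>i\<in>{1..(\<Sum>j<J. k j)}. L (x - \<mu> i))"
      using mu unfolding L_def by simp
    also have "\<dots> \<le> (\<Sum>i\<in>{1..N}. L (x - \<mu> i))"
      using kN Lnn by (intro sum_mono2) auto
    finally show ?thesis unfolding mixf_def L_def by (intro mult_left_mono) auto
  qed
  then show ?thesis using s by (intro exI[of _ \<mu>] exI[of _ "\<lambda>_. s"]) auto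
qed

lemma step_integral_le:
  fixes c :: "nat \<Rightarrow> real" and B :: "real \<Rightarrow> real" and a0 h :: real
  assumes h: "0 < h"
    and cB: "\<And>j z. j < J \<Longrightarrow> a0 + real j * h \<le> z \<Longrightarrow> z < a0 + real (Suc j) * h \<Longrightarrow> c j \<le> B z"
    and Bnn: "\<And>z. 0 \<le> B z" and Bint: "integrable lborel B"
  shows "(\<Sum>j<J. h * c j) \<le> (\<integral>z. B z \<partial>lborel)"
proof -
  define C where "C = (\<lambda>j::nat. {a0 + real j * h ..< a0 + real (Suc j) * h})"
  define st where "st = (\<lambda>z. \<Sum>j<J. c j * indicator (C j) z)"
  have finC: "emeasure lborel (C j) < \<top>" for j
    unfolding C_def using h by (subst emeasure_lborel_Ico) (auto simp: algebra_simps)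
  have intC: "integrable lborel (\<lambda>z. c j * indicator (C j) z :: real)" for j
    using finC[of j] unfolding C_def by (intro integrable_mult_right integrable_real_indicator) auto
  have hb: "has_bochner_integral lborel (\<lambda>z. c j * indicator (C j) z) (c j * h)" for j
  proof -
    have "has_bochner_integral lborel (indicator (C j)) (measure lborel (C j))"
      by (rule has_bochner_integral_real_indicator) (use finC[of j] in \<open>auto simp: C_def\<close>)
    moreover have "measure lborel (C j) = h" unfolding C_def using h by (simp add: algebra_simps)
    ultimately show ?thesis by (intro has_bochner_integral_mult_right) simp
  qed
  have "has_bochner_integral lborel st (\<Sum>j<J. c j * h)"
    unfolding st_def by (rule has_bochner_integral_sum) (rule hb)
  then have st_int: "(\<integral>z. st z \<partial>lborel) = (\<Sum>j<J. h * c j)"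
    by (simp add: has_bochner_integral_iff mult.commute)
  have disj: "j = l" if "z \<in> C j" "z \<in> C l" for z j l
  proof (rule ccontr)
    assume "j \<noteq> l"
    then consider "j < l" | "l < j" by linarith
    then show False
    proof cases
      case 1
      then have "real (Suc j) * h \<le> real l * h" using h by (intro mult_right_mono) auto
      then show False using that unfolding C_def by auto
    next
      case 2
      then have "real (Suc l) * h \<le> real j * h" using h by (intro mult_right_mono) auto
      then show False using that unfolding C_def by auto
    qed
  qed
  have st_le: "st z \<le> B z" for z
  proof (cases "\<exists>j<J. z \<in> C j")
    case True
    then obtain j where j: "j < J" "z \<in> C j" by blast
    have "st z = (\<Sum>l\<in>{j}. c l * indicator (C l) z)"
      unfolding st_def
      by (rule sum.mono_neutral_right) (use j disj in \<open>auto split: split_indicator\<close>)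
    also have "\<dots> = c j" using j by simp
    also have "\<dots> \<le> B z" using cB[of j z] j unfolding C_def by auto
    finally show ?thesis .
  next
    case False
    then have "st z = 0" unfolding st_def by (intro sum.neutral) auto
    then show ?thesis using Bnn by simp
  qed
  have "(\<integral>z. st z \<partial>lborel) \<le> (\<integral>z. B z \<partial>lborel)"
    by (rule integral_mono[OF _ Bint]) (use \<open>has_bochner_integral lborel st _\<close> st_le in \<open>auto simp: has_bochner_integral_iff\<close>)
  then show ?thesis using st_int by simp
qed



lemma exp_neg_le_sq: assumes "0 < (t::real)" shows "exp (- t) \<le> 2 / t^2"
proof -
  have "t^2 / 2 \<le> exp t" using exp_lower_Taylor_quadratic[of t] assms by simp
  then have "1 / exp t \<le> 1 / (t^2 / 2)" using assms by (intro divide_left_mono) auto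
  then show ?thesis by (simp add: exp_minus divide_simps)
qed

lemma final_arith:
  fixes \<eta> p \<delta> \<tau> K1 E C Z :: real
  assumes \<eta>: "0 < \<eta>" "\<eta> < 1/5" and p: "\<delta> \<le> p" "0 < \<delta>" and \<tau>: "\<tau> \<le> \<eta> * \<delta>"
    and K1: "1 - \<eta> \<le> K1" and E: "E \<le> \<eta> * \<delta>" and C: "C \<le> \<eta> * \<delta>"
    and Z: "((p - \<tau>) * K1 - E) / (1 + \<eta>) - C \<le> Z"
  shows "(1 - 5 * \<eta>) * p \<le> Z"
proof -
  have ed: "\<eta> * \<delta> \<le> \<eta> * p" using p \<eta> by (intro mult_left_mono) auto
  have ptau: "p * (1 - \<eta>) \<le> p - \<tau>" using \<tau> ed by (simp add: algebra_simps)
  have "0 \<le> p * (1 - \<eta>)" using p \<eta> by simp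
  then have "(p * (1 - \<eta>)) * (1 - \<eta>) \<le> (p - \<tau>) * K1"
    using ptau K1 \<eta> by (intro mult_mono) auto
  moreover have "E \<le> \<eta> * p" using E ed by linarith
  ultimately have "p * (1 - \<eta>) * (1 - \<eta>) - \<eta> * p \<le> (p - \<tau>) * K1 - E" by linarith
  then have A: "(p * (1 - \<eta>) * (1 - \<eta>) - \<eta> * p) / (1 + \<eta>) \<le> ((p - \<tau>) * K1 - E) / (1 + \<eta>)"
    using \<eta> by (intro divide_right_mono) auto
  have B: "(1 - 4 * \<eta>) * p \<le> (p * (1 - \<eta>) * (1 - \<eta>) - \<eta> * p) / (1 + \<eta>)"
  proof -
    have "(1 - 4 * \<eta>) * p * (1 + \<eta>) \<le> p * (1 - \<eta>) * (1 - \<eta>) - \<eta> * p"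
    proof -
      have "(1 - 4 * \<eta>) * p * (1 + \<eta>) = p * (1 - 3 * \<eta> - 4 * \<eta>^2)" by (simp add: algebra_simps power2_eq_square)
      also have "\<dots> \<le> p * (1 - 3 * \<eta> + \<eta>^2)" using p \<eta> by (intro mult_left_mono) auto
      also have "\<dots> = p * (1 - \<eta>) * (1 - \<eta>) - \<eta> * p" by (simp add: algebra_simps power2_eq_square)
      finally show ?thesis .
    qed
    then show ?thesis using \<eta> by (simp add: le_divide_eq)
  qed
  have "C \<le> \<eta> * p" using C ed by linarith
  then show ?thesis using A B Z by (simp add: algebra_simps)
qed



lemma approx_main:
  fixes S :: "real set" and p :: "real \<Rightarrow> real" and \<delta> c :: real
  assumes cS: "compact S" and cp: "continuous_on S p" and pnn: "\<forall>x\<in>S. 0 \<le> p x"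
    and hbi: "has_bochner_integral lborel (\<lambda>x. indicator S x * p x) 1"
    and \<delta>: "0 < \<delta>" and p\<delta>: "\<forall>x\<in>S. \<delta> \<le> p x" and c: "0 < c" "c < 1"
  shows "\<exists>N \<mu> s. N \<ge> 1 \<and> (\<forall>i\<in>{1..N}. 0 < s i) \<and> (\<forall>x\<in>S. c * p x \<le> mixf N \<mu> s x)"
proof -
  have Sne: "S \<noteq> {}"
  proof
    assume "S = {}"
    then have "has_bochner_integral lborel (\<lambda>x::real. 0::real) 1" using hbi by simp
    then show False using has_bochner_integral_eq[OF _ has_bochner_integral_zero] by fastforce
  qed
  obtain M where M: "0 < M" "\<forall>x\<in>S. p x \<le> M"
  proof -
    have "bounded (p ` S)" by (rule compact_imp_bounded[OF compact_continuous_image[OF cp cS]])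
    then obtain b where "0 < b" "\<forall>y\<in>p ` S. norm y \<le> b" by (auto simp: bounded_pos)
    then show ?thesis using that[of b] abs_le_D1 by (metis image_eqI norm_conv_dist dist_0_norm real_norm_def)
  qed
  obtain R where R: "0 < R" "\<forall>x\<in>S. \<bar>x\<bar> \<le> R"
    using compact_imp_bounded[OF cS] by (auto simp: bounded_pos)
  define R' where "R' = R + 1"
  have R': "0 < R'" "1 \<le> R'" using R unfolding R'_def by auto
  define \<eta> where "\<eta> = (1 - c) / 5"
  have \<eta>: "0 < \<eta>" "\<eta> < 1/5" using c unfolding \<eta>_def by auto
  define \<gamma> where "\<gamma> = \<eta> / (2 * M)"
  have \<gamma>: "0 < \<gamma>" using \<eta> M unfolding \<gamma>_def by auto
  have Sb: "S \<in> sets borel" using cS by (simp add: compact_imp_closed)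
  obtain U where U: "open U" "S \<subseteq> U" "emeasure lborel (U - S) < \<gamma>"
    using outer_regular_lborel[OF Sb \<gamma>] by blast
  have USb: "U - S \<in> sets borel" using U Sb by auto
  have finUS: "emeasure lborel (U - S) < \<top>" using U(3) by (auto simp: less_top[symmetric] intro: order.strict_trans)
  have mUS: "measure lborel (U - S) < \<gamma>"
  proof -
    have "emeasure lborel (U - S) = ennreal (measure lborel (U - S))"
      using finUS by (intro emeasure_eq_ennreal_measure) auto
    then show ?thesis using U(3) \<gamma> by (simp add: ennreal_less_iff)
  qed
  obtain d where d: "0 < d" "\<forall>x\<in>S. \<forall>y\<in>- U. d \<le> dist x y"
    using separate_compact_closed[OF cS, of "- U"] U by auto
  have dU: "z \<in> U" if "infdist z S < d" for z
  proof (rule ccontr)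
    assume zU: "z \<notin> U"
    obtain x where x: "x \<in> S" "infdist z S = dist z x"
      using infdist_attains_inf[OF compact_imp_closed[OF cS] Sne] by blast
    then have "d \<le> dist x z" using d zU by auto
    then show False using that x by (simp add: dist_commute)
  qed
  define \<psi> where "\<psi> = (\<lambda>z. max 0 (1 - infdist z S / d))"
  have \<psi>c: "continuous_on UNIV \<psi>" unfolding \<psi>_def by (intro continuous_intros) (use d in auto)
  have \<psi>S: "\<psi> x = 1" if "x \<in> S" for x using that unfolding \<psi>_def by simp
  have \<psi>01: "0 \<le> \<psi> z" "\<psi> z \<le> 1" for z unfolding \<psi>_def using infdist_nonneg[of z S] d by auto
  have \<psi>U: "z \<in> U" if "\<psi> z \<noteq> 0" for z
  proof -
    have "infdist z S < d" using that d unfolding \<psi>_def by (auto simp: max_def divide_simps split: if_splits)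
    then show ?thesis by (rule dU)
  qed
  obtain pe where pe: "continuous_on UNIV pe" "\<And>x. x \<in> S \<Longrightarrow> pe x = p x" "\<And>x. norm (pe x) \<le> M"
    using Tietze[OF cp, of UNIV M] M pnn compact_imp_closed[OF cS] by auto
  define q where "q = (\<lambda>z. max 0 (pe z) * \<psi> z)"
  have qc: "continuous_on UNIV q" unfolding q_def by (intro continuous_intros pe \<psi>c)
  have qnn: "0 \<le> q z" for z unfolding q_def using \<psi>01[of z] by simp
  have qM: "q z \<le> M" for z
  proof -
    have "max 0 (pe z) \<le> M" using pe(3)[of z] M by auto
    then have "max 0 (pe z) * \<psi> z \<le> M * 1" using \<psi>01[of z] by (intro mult_mono) auto
    then show ?thesis unfolding q_def by simp
  qed
  have qS: "q x = p x" if "x \<in> S" for x using that pe(2) \<psi>S pnn unfolding q_def by auto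
  have qB: "q z \<le> indicator S z * p z + M * indicator (U - S) z" for z
  proof (cases "z \<in> S")
    case True then show ?thesis using qS by simp
  next
    case False
    show ?thesis
    proof (cases "\<psi> z = 0")
      case True then show ?thesis using False M by (simp add: q_def indicator_def)
    next
      case False': False
      then have "z \<in> U" by (rule \<psi>U)
      then show ?thesis using False qM[of z] by simp
    qed
  qed
  define \<tau> where "\<tau> = min (\<eta> * \<delta>) (\<eta> / (4 * R'))"
  have \<tau>: "0 < \<tau>" "\<tau> \<le> \<eta> * \<delta>" "\<tau> \<le> \<eta> / (4 * R')" using \<eta> \<delta> R' unfolding \<tau>_def by auto
  obtain r where r: "0 < r" "\<And>z w. z \<in> {-R'..R'} \<Longrightarrow> w \<in> {-R'..R'} \<Longrightarrow> \<bar>z - w\<bar> < r \<Longrightarrow> \<bar>q z - q w\<bar> < \<tau>"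
  proof -
    have "uniformly_continuous_on {-R'..R'} q"
      by (rule compact_uniformly_continuous[OF continuous_on_subset[OF qc] compact_Icc]) auto
    then obtain r where "0 < r" "\<forall>z\<in>{-R'..R'}. \<forall>w\<in>{-R'..R'}. dist w z < r \<longrightarrow> dist (q w) (q z) < \<tau>"
      using \<tau>(1) unfolding uniformly_continuous_on_def by blast
    then show ?thesis using that[of r] by (auto simp: dist_real_def abs_minus_commute)
  qed
  define s where "s = min 1 (min (\<eta> / 8) (\<eta> * \<delta> * r^2 / (4 * R' * M)))"
  have s: "0 < s" "s \<le> 1" "s \<le> \<eta> / 8" "s \<le> \<eta> * \<delta> * r^2 / (4 * R' * M)"
    using \<eta> \<delta> r R' M unfolding s_def by auto
  define J :: nat where "J = nat \<lceil>max (2 * R' / r) (2 * R'^2 / (\<eta> * s^2))\<rceil> + 1"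
  have J1: "J \<ge> 1" unfolding J_def by simp
  have Jr: "2 * R' / r < real J" and Js: "2 * R'^2 / (\<eta> * s^2) < real J"
    unfolding J_def by linarith+
  define h where "h = 2 * R' / real J"
  have h: "0 < h" using R' J1 unfolding h_def by auto
  have hr: "h < r" using Jr r J1 unfolding h_def by (simp add: divide_less_eq mult.commute)
  have Jh: "real J * h = 2 * R'" using J1 unfolding h_def by simp
  have hs: "R' * h / (2 * s^2) \<le> \<eta> / 2"
  proof -
    have "2 * R'^2 < real J * (\<eta> * s^2)" using Js \<eta> s by (simp add: divide_less_eq)
    then have "R' * h < \<eta> * s^2" unfolding h_def using J1 R'
      by (simp add: power2_eq_square field_simps)
    then show ?thesis using s by (simp add: divide_simps)
  qed
  define a where "a = (\<lambda>j::nat. - R' + real j * h)"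
  define v where "v = (\<lambda>j. h * q (a j) / (1 + \<eta>))"
  have vnn: "0 \<le> v j" for j unfolding v_def using qnn h \<eta> by simp
  define B where "B = (\<lambda>z. indicator S z * p z + M * indicator (U - S) z + \<tau> * indicator {-R'..R'} z)"
  have int1: "integrable lborel (\<lambda>x. indicator S x * p x)" using hbi by (simp add: has_bochner_integral_iff)
  have int2: "integrable lborel (\<lambda>z. M * indicator (U - S) z :: real)"
    using USb finUS by (intro integrable_mult_right integrable_real_indicator) auto
  have int3: "integrable lborel (\<lambda>z. \<tau> * indicator {-R'..R'} z :: real)"
    using R' by (intro integrable_mult_right integrable_real_indicator) auto
  have Bint: "integrable lborel B" unfolding B_def using int1 int2 int3 by auto
  have Bval: "(\<integral>z. B z \<partial>lborel) = 1 + M * measure lborel (U - S) + \<tau> * (2 * R')"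
  proof -
    have "(\<integral>z. B z \<partial>lborel) = (\<integral>z. indicator S z * p z \<partial>lborel) + (\<integral>z. M * indicator (U - S) z \<partial>lborel)
        + (\<integral>z. \<tau> * indicator {-R'..R'} z \<partial>lborel)"
      unfolding B_def using int1 int2 int3 by simp
    also have "(\<integral>z. indicator S z * p z \<partial>lborel) = 1" using hbi by (simp add: has_bochner_integral_iff)
    also have "(\<integral>z. M * indicator (U - S) z \<partial>lborel) = M * measure lborel (U - S)" by simp
    also have "(\<integral>z. \<tau> * indicator {-R'..R'} z \<partial>lborel) = \<tau> * (2 * R')" using R' by simp
    finally show ?thesis .
  qed
  have Bnn: "0 \<le> B z" for z unfolding B_def using pnn M \<tau> by (auto simp: indicator_def)
  have sumq: "(\<Sum>j<J. h * q (a j)) \<le> (\<integral>z. B z \<partial>lborel)"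
  proof (rule step_integral_le[OF h _ Bnn Bint, where J=J and c="\<lambda>j. q (a j)" and ?a0.0="- R'"])
    fix j z assume j: "j < J" and z: "- R' + real j * h \<le> z" "z < - R' + real (Suc j) * h"
    have "real (Suc j) * h \<le> real J * h" using j h by (intro mult_right_mono) auto
    moreover have jh0: "0 \<le> real j * h" using h by simp
    ultimately have "- R' \<le> z" "z \<le> R'" using z Jh by linarith+
    then have zR: "z \<in> {-R'..R'}" by auto
    have aR: "a j \<in> {-R'..R'}" unfolding a_def using z zR jh0 by auto
    have "\<bar>a j - z\<bar> < r" using z hr unfolding a_def by (auto simp: algebra_simps)
    then have "q (a j) \<le> q z + \<tau>" using r(2)[OF aR zR] by linarith
    also have "\<dots> \<le> B z" using qB[of z] zR unfolding B_def by simp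
    finally show "q (a j) \<le> B z" .
  qed
  have sumv: "(\<Sum>j<J. v j) \<le> 1"
  proof -
    have "(\<Sum>j<J. h * q (a j)) \<le> 1 + \<eta>"
    proof -
      have "M * measure lborel (U - S) \<le> M * \<gamma>" using mUS M by (intro mult_left_mono) auto
      also have "\<dots> = \<eta> / 2" unfolding \<gamma>_def using M by simp
      finally have 1: "M * measure lborel (U - S) \<le> \<eta> / 2" .
      have 2: "\<tau> * (2 * R') \<le> \<eta> / 2" using \<tau>(3) R' by (simp add: le_divide_eq field_simps)
      show ?thesis using sumq Bval 1 2 by linarith
    qed
    then have "(\<Sum>j<J. h * q (a j)) / (1 + \<eta>) \<le> 1" using \<eta> by simp
    then show ?thesis unfolding v_def by (simp add: sum_divide_distrib)
  qed
  define N :: nat where "N = nat \<lceil>real J / (4 * s * \<eta> * \<delta>)\<rceil> + 1"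
  have N1: "N \<ge> 1" unfolding N_def by simp
  have NJ: "real J / (4 * s * \<eta> * \<delta>) < real N" unfolding N_def by linarith
  have CN: "real J / (4 * s * real N) \<le> \<eta> * \<delta>"
  proof -
    have "real J < real N * (4 * s * \<eta> * \<delta>)" using NJ s \<eta> \<delta> by (simp add: divide_less_eq)
    then show ?thesis using s N1 by (simp add: divide_simps algebra_simps)
  qed
  define k where "k = (\<lambda>j. nat \<lfloor>real N * v j\<rfloor>)"
  have kle: "real (k j) \<le> real N * v j" for j unfolding k_def using vnn[of j] by simp
  have kge: "real N * v j - 1 \<le> real (k j)" for j unfolding k_def using vnn[of j] by linarith
  have ksum: "(\<Sum>j<J. k j) \<le> N"
  proof -
    have "real (\<Sum>j<J. k j) = (\<Sum>j<J. real (k j))" by simp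
    also have "\<dots> \<le> (\<Sum>j<J. real N * v j)" by (intro sum_mono kle)
    also have "\<dots> = real N * (\<Sum>j<J. v j)" by (simp add: sum_distrib_left)
    also have "\<dots> \<le> real N * 1" using sumv by (intro mult_left_mono) auto
    finally have "real (\<Sum>j<J. k j) \<le> real N" by (simp only: mult_1_right)
    then show ?thesis by (simp only: of_nat_le_iff)
  qed
  obtain \<mu> \<sigma> where \<mu>\<sigma>: "\<forall>i\<in>{1..N}. 0 < \<sigma> i"
    "\<forall>x. (1 / real N) * (\<Sum>j<J. real (k j) * (lgd ((x - a j) / s) / s)) \<le> mixf N \<mu> \<sigma> x"
    using counts_mixture[OF N1 s(1) ksum] by blast
  have main: "c * p x \<le> mixf N \<mu> \<sigma> x" if xS: "x \<in> S" for x
  proof -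
    define L where "L = (\<lambda>j. lgd ((x - a j) / s) / s)"
    have Lnn: "0 \<le> L j" for j unfolding L_def using lgd_pos s by (simp add: less_imp_le)
    have Lle: "L j \<le> 1 / (4 * s)" for j unfolding L_def using lgd_le s by (simp add: divide_simps)
    have px: "\<delta> \<le> p x" "p x \<le> M" using p\<delta> M xS by auto
    have xR: "\<bar>x\<bar> \<le> R" using R xS by auto
    have st1: "(\<Sum>j<J. v j * L j) - real J / (4 * s * real N) \<le> (1 / real N) * (\<Sum>j<J. real (k j) * L j)"
    proof -
      have "(\<Sum>j<J. v j * L j) - (\<Sum>j<J. (1 / real N) * L j) \<le> (1 / real N) * (\<Sum>j<J. real (k j) * L j)"
      proof -
        have "(\<Sum>j<J. v j * L j) - (\<Sum>j<J. (1 / real N) * L j) = (\<Sum>j<J. (v j - 1 / real N) * L j)"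
          by (simp add: sum_subtractf[symmetric] algebra_simps)
        also have "\<dots> \<le> (\<Sum>j<J. (1 / real N) * (real (k j) * L j))"
        proof (intro sum_mono)
          fix j
          have "v j - 1 / real N = (real N * v j - 1) / real N" using N1 by (simp add: field_simps)
          also have "\<dots> \<le> real (k j) / real N" using kge[of j] by (intro divide_right_mono) auto
          finally have "v j - 1 / real N \<le> real (k j) / real N" .
          then have "(v j - 1 / real N) * L j \<le> (real (k j) / real N) * L j"
            using Lnn by (intro mult_right_mono) auto
          then show "(v j - 1 / real N) * L j \<le> (1 / real N) * (real (k j) * L j)" by simp
        qed
        also have "\<dots> = (1 / real N) * (\<Sum>j<J. real (k j) * L j)" by (simp add: sum_distrib_left)
        finally show ?thesis .
      qed
      moreover have "(\<Sum>j<J. (1 / real N) * L j) \<le> real J / (4 * s * real N)"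
      proof -
        have "(\<Sum>j<J. (1 / real N) * L j) \<le> (\<Sum>j<J. (1 / real N) * (1 / (4 * s)))"
          using Lle N1 by (intro sum_mono mult_left_mono) auto
        then show ?thesis by (simp add: mult.commute)
      qed
      ultimately show ?thesis by linarith
    qed
    define E where "E = 2 * R' * M * (exp (- (r / s)) / s)"
    have st2: "(p x - \<tau>) * (\<Sum>j<J. h * L j) - E \<le> (\<Sum>j<J. h * q (a j) * L j)"
    proof -
      have each: "h * (p x - \<tau>) * L j - h * M * (exp (- (r / s)) / s) \<le> h * q (a j) * L j" if j: "j < J" for j
      proof (cases "\<bar>x - a j\<bar> < r")
        case True
        have xR': "x \<in> {-R'..R'}" using xR unfolding R'_def by auto
        have "real j * h \<le> real J * h" using j h by (intro mult_right_mono) auto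
        then have aR: "a j \<in> {-R'..R'}" unfolding a_def using Jh h by auto
        have "p x - \<tau> \<le> q (a j)" using r(2)[OF xR' aR True] qS[OF xS] by linarith
        then have "h * (p x - \<tau>) * L j \<le> h * q (a j) * L j"
          using h Lnn by (intro mult_right_mono mult_left_mono) auto
        moreover have "0 \<le> h * M * (exp (- (r / s)) / s)" using h M s by simp
        ultimately show ?thesis by linarith
      next
        case False
        have "r / s \<le> \<bar>(x - a j) / s\<bar>" using False s by (simp add: divide_right_mono abs_div)
        then have "lgd ((x - a j) / s) \<le> exp (- (r / s))"
          using lgd_le_exp[of "(x - a j) / s"] by (meson exp_le_cancel_iff neg_le_iff_le order_trans)
        then have LE: "L j \<le> exp (- (r / s)) / s" unfolding L_def using s by (simp add: divide_right_mono)
        have "p x - \<tau> \<le> M" using px \<tau> by linarith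
        then have "h * (p x - \<tau>) * L j \<le> h * M * L j" using h Lnn by (intro mult_right_mono mult_left_mono) auto
        also have "\<dots> \<le> h * M * (exp (- (r / s)) / s)" using LE h M by (intro mult_left_mono) auto
        finally have "h * (p x - \<tau>) * L j - h * M * (exp (- (r / s)) / s) \<le> 0" by simp
        also have "0 \<le> h * q (a j) * L j" using h qnn Lnn by simp
        finally show ?thesis .
      qed
      have "(\<Sum>j<J. h * (p x - \<tau>) * L j - h * M * (exp (- (r / s)) / s))
          = (p x - \<tau>) * (\<Sum>j<J. h * L j) - real J * (h * M * (exp (- (r / s)) / s))"
      proof -
        have "(\<Sum>j<J. h * (p x - \<tau>) * L j - h * M * (exp (- (r / s)) / s))
           = (\<Sum>j<J. h * (p x - \<tau>) * L j) - (\<Sum>j<J. h * M * (exp (- (r / s)) / s))"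
          by (rule sum_subtractf)
        also have "(\<Sum>j<J. h * (p x - \<tau>) * L j) = (p x - \<tau>) * (\<Sum>j<J. h * L j)"
          by (simp add: sum_distrib_left mult.commute mult.left_commute)
        also have "(\<Sum>j<J. h * M * (exp (- (r / s)) / s)) = real J * (h * M * (exp (- (r / s)) / s))"
          by simp
        finally show ?thesis .
      qed
      also have "real J * (h * M * (exp (- (r / s)) / s)) = (real J * h) * (M * (exp (- (r / s)) / s))"
        by (simp only: mult.assoc)
      also have "\<dots> = E" unfolding E_def Jh by (simp only: mult.assoc)
      finally have "(p x - \<tau>) * (\<Sum>j<J. h * L j) - E = (\<Sum>j<J. h * (p x - \<tau>) * L j - h * M * (exp (- (r / s)) / s))"
        by simp
      also have "\<dots> \<le> (\<Sum>j<J. h * q (a j) * L j)" using each by (intro sum_mono) auto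
      finally show ?thesis .
    qed
    have st3: "1 - \<eta> \<le> (\<Sum>j<J. h * L j)"
    proof -
      have ks: "sigmoid ((x - (- R')) / s) - sigmoid ((x - (- R' + real J * h)) / s) - real J * h^2 / (4 * s^2)
         \<le> (\<Sum>j<J. h * (lgd ((x - (- R' + real j * h)) / s) / s))"
        by (rule kernel_sum_lower[OF s(1) h])
      have e1: "exp (- (1 / s)) \<le> 2 * s^2" using exp_neg_le_sq[of "1 / s"] s by (simp add: power_divide)
      have "1 / s \<le> (x + R') / s" using xR s unfolding R'_def by (intro divide_right_mono) auto
      then have "1 - exp (- (1 / s)) \<le> sigmoid ((x - (- R')) / s)"
        using sigmoid_ge[of "(x + R') / s"] by (smt (verit) exp_le_cancel_iff)
      moreover have "sigmoid ((x - (- R' + real J * h)) / s) \<le> exp (- (1 / s))"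
      proof -
        have "(x - (- R' + real J * h)) / s \<le> - (1 / s)" using xR s Jh unfolding R'_def
          by (simp add: divide_simps)
        then show ?thesis using sigmoid_le_exp[of "(x - (- R' + real J * h)) / s"]
          by (smt (verit) exp_le_cancel_iff)
      qed
      moreover have "real J * h^2 / (4 * s^2) = R' * h / (2 * s^2)"
      proof -
        have "real J * h^2 = (real J * h) * h" by (simp add: power2_eq_square)
        also have "\<dots> = 2 * R' * h" using Jh by simp
        finally show ?thesis by simp
      qed
      moreover have "4 * s^2 \<le> \<eta> / 2"
      proof -
        have "s * s \<le> 1 * (\<eta> / 8)" using s by (intro mult_mono) auto
        then show ?thesis by (simp add: power2_eq_square)
      qed
      ultimately show ?thesis using ks hs e1 unfolding L_def a_def by linarith
    qed
    have Ebnd: "E \<le> \<eta> * \<delta>"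
    proof -
      have "exp (- (r / s)) \<le> 2 / (r / s)^2" using exp_neg_le_sq[of "r / s"] r s by simp
      then have "exp (- (r / s)) / s \<le> 2 * s / r^2" using r s by (simp add: divide_simps power2_eq_square)
      then have "E \<le> 2 * R' * M * (2 * s / r^2)" unfolding E_def using R' M by (intro mult_left_mono) auto
      also have "\<dots> = (4 * R' * M / r^2) * s" by (simp add: algebra_simps)
      also have "\<dots> \<le> (4 * R' * M / r^2) * (\<eta> * \<delta> * r^2 / (4 * R' * M))"
        using s R' M r by (intro mult_left_mono) auto
      also have "\<dots> = \<eta> * \<delta>" using R' M r by (simp add: field_simps)
      finally show ?thesis .
    qed
    have "(\<Sum>j<J. v j * L j) = (\<Sum>j<J. h * q (a j) * L j) / (1 + \<eta>)"
      unfolding v_def by (simp add: sum_divide_distrib)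
    then have Z: "((p x - \<tau>) * (\<Sum>j<J. h * L j) - E) / (1 + \<eta>) - real J / (4 * s * real N)
       \<le> mixf N \<mu> \<sigma> x"
      using st1 st2 \<mu>\<sigma>(2)[rule_format, of x] \<eta> unfolding L_def
      by (smt (verit) divide_right_mono)
    have "(1 - 5 * \<eta>) * p x \<le> mixf N \<mu> \<sigma> x"
      by (rule final_arith[OF \<eta> px(1) \<delta> \<tau>(2) st3 Ebnd CN Z])
    moreover have "1 - 5 * \<eta> = c" unfolding \<eta>_def by (simp add: field_simps)
    ultimately show ?thesis by simp
  qed
  show ?thesis using N1 \<mu>\<sigma>(1) main by blast
qed



theorem mainTheorem3:
  fixes S :: "real set" and p :: "real \<Rightarrow> real" and \<delta> :: real
  assumes "compact S"
    and "continuous_on S p"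
    and "\<forall>x\<in>S. 0 \<le> p x"
    and "has_bochner_integral lborel (\<lambda>x. indicator S x * p x) 1"
    and "\<delta> > 0"
    and "(INF x\<in>S. p x) > \<delta>"
  shows "\<forall>\<epsilon>>0. \<exists>N::nat. N \<ge> 1 \<and> (\<exists>\<mu> \<sigma> :: nat \<Rightarrow> real. (\<forall>i\<in>{1..N}. \<sigma> i > 0) \<and>
           KL_div (distr (density lborel (\<lambda>x. ennreal (indicator S x * p x))) lborel
                     (\<lambda>x. Phi_inv ((1 / real N) * (\<Sum>i=1..N. sigmoid ((x - \<mu> i) / \<sigma> i)))))
                  (density lborel std_normal_density) < ereal \<epsilon>)"
proof (intro allI impI)
  fix \<epsilon> :: real assume \<epsilon>: "\<epsilon> > 0"
  note cS = assms(1) and cp = assms(2) and pnn = assms(3) and hbi = assms(4) and \<delta> = assms(5)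
  have p\<delta>: "\<forall>x\<in>S. \<delta> \<le> p x"
  proof
    fix x assume x: "x \<in> S"
    have "bdd_below (p ` S)" using pnn by (auto intro: bdd_belowI2)
    then have "(INF x\<in>S. p x) \<le> p x" using x by (rule cINF_lower)
    then show "\<delta> \<le> p x" using assms(6) by linarith
  qed
  define c where "c = exp (- (\<epsilon> / 2))"
  have c: "0 < c" "c < 1" using \<epsilon> unfolding c_def by auto
  obtain N \<mu> s where N: "N \<ge> 1" and s: "\<forall>i\<in>{1..N}. 0 < s i"
    and lb: "\<forall>x\<in>S. c * p x \<le> mixf N \<mu> s x"
    using approx_main[OF cS cp pnn hbi \<delta> p\<delta> c] by blast
  define pt where "pt = (\<lambda>x. indicator S x * p x)"
  define fmax where "fmax = (1 / real N) * (\<Sum>i=1..N. 1 / (4 * s i))"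
  have fmax: "0 < fmax"
  proof -
    have "0 < (\<Sum>i=1..N. 1 / (4 * s i))" using N s by (intro sum_pos) auto
    then show ?thesis unfolding fmax_def using N by simp
  qed
  have ptb: "pt \<in> borel_measurable borel"
    using borel_measurable_has_bochner_integral[OF hbi] unfolding pt_def by simp
  have ptn: "0 \<le> pt x" for x unfolding pt_def using pnn by (auto simp: indicator_def)
  have Pprob: "prob_space (density lborel pt)"
  proof (rule prob_spaceI)
    have int: "integrable lborel pt" using hbi unfolding pt_def by (simp add: has_bochner_integral_iff)
    have "emeasure (density lborel pt) UNIV = (\<integral>\<^sup>+x. ennreal (pt x) \<partial>lborel)"
      using ptb by (simp add: emeasure_density)
    also have "\<dots> = ennreal (\<integral>x. pt x \<partial>lborel)"
      by (rule nn_integral_eq_integral[OF int]) (use ptn in auto)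
    also have "(\<integral>x. pt x \<partial>lborel) = 1" using hbi unfolding pt_def by (simp add: has_bochner_integral_iff)
    finally show "emeasure (density lborel pt) (space (density lborel pt)) = 1" by simp
  qed
  have c1: "0 < \<delta> / fmax" using \<delta> fmax by simp
  have bnd: "\<delta> / fmax \<le> pt x / mixf N \<mu> s x \<and> pt x / mixf N \<mu> s x \<le> exp (\<epsilon> / 2)"
    if "pt x \<noteq> 0" for x
  proof -
    have xS: "x \<in> S" using that unfolding pt_def by (auto simp: indicator_def)
    have ptx: "pt x = p x" unfolding pt_def using xS by simp
    have fpos: "0 < mixf N \<mu> s x" using mixf_pos[OF N s] .
    have fle: "mixf N \<mu> s x \<le> fmax" unfolding fmax_def using mixf_le[OF N s] .
    have px: "\<delta> \<le> p x" using p\<delta> xS by auto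
    have "\<delta> / fmax \<le> p x / fmax" by (rule divide_right_mono[OF px]) (use fmax in simp)
    also have "p x / fmax \<le> p x / mixf N \<mu> s x"
      by (rule divide_left_mono) (use fpos fle px \<delta> in auto)
    finally have 1: "\<delta> / fmax \<le> pt x / mixf N \<mu> s x" using ptx by simp
    have cp: "c * p x \<le> mixf N \<mu> s x" using lb xS by auto
    have ce: "exp (\<epsilon> / 2) * c = 1" unfolding c_def by (simp add: exp_add[symmetric])
    have ic: "1 / c = exp (\<epsilon> / 2)" using ce c by (simp add: field_simps)
    have "p x = (1 / c) * (c * p x)" using c(1) by simp
    also have "\<dots> \<le> (1 / c) * mixf N \<mu> s x" using cp c by (intro mult_left_mono) auto
    finally have "p x \<le> (1 / c) * mixf N \<mu> s x" .
    then have "p x / mixf N \<mu> s x \<le> 1 / c" using pos_divide_le_eq[OF fpos] by simp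
    then have 2: "pt x / mixf N \<mu> s x \<le> exp (\<epsilon> / 2)" using ptx ic by simp
    show ?thesis using 1 2 by simp
  qed
  have KL: "KL_div (distr (density lborel pt) lborel (\<lambda>x. Phi_inv (mixF N \<mu> s x))) QN \<le> ereal (ln (exp (\<epsilon> / 2)))"
    by (rule KL_reduction[OF N s ptb ptn Pprob c1 bnd])
  have "ereal (ln (exp (\<epsilon> / 2))) < ereal \<epsilon>" using \<epsilon> by simp
  with KL have KL': "KL_div (distr (density lborel pt) lborel (\<lambda>x. Phi_inv (mixF N \<mu> s x))) QN < ereal \<epsilon>"
    by (rule le_less_trans)
  have eqf: "(\<lambda>x. Phi_inv (mixF N \<mu> s x)) = (\<lambda>x. Phi_inv ((1 / real N) * (\<Sum>i=1..N. sigmoid ((x - \<mu> i) / s i))))"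
    unfolding mixF_def ..
  have KL'': "KL_div (distr (density lborel (\<lambda>x. ennreal (indicator S x * p x))) lborel
                     (\<lambda>x. Phi_inv ((1 / real N) * (\<Sum>i=1..N. sigmoid ((x - \<mu> i) / s i)))))
                  (density lborel std_normal_density) < ereal \<epsilon>"
    using KL' unfolding eqf pt_def .
  show "\<exists>N::nat. N \<ge> 1 \<and> (\<exists>\<mu> \<sigma> :: nat \<Rightarrow> real. (\<forall>i\<in>{1..N}. \<sigma> i > 0) \<and>
           KL_div (distr (density lborel (\<lambda>x. ennreal (indicator S x * p x))) lborel
                     (\<lambda>x. Phi_inv ((1 / real N) * (\<Sum>i=1..N. sigmoid ((x - \<mu> i) / \<sigma> i)))))
                  (density lborel std_normal_density) < ereal \<epsilon>)"
    using N s KL'' by blast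
qed


end
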